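(* Let $\mathcal{D}\subset\mathbb{R}^d$ be compact, $0<a,b<\infty$, $c:=a+b$, $p_Z\in\mathcal{P}_Z$, and let $p_X$ satisfy $\inf_{x\in\mathcal{D}}p_X(x)=\nu>0$. Let $\mathcal{B}=\{\phi_j\}_{j=0}^\infty$ be an orthonormal (Schauder) basis of $\mathbf{L}^2(\mathcal{D})$. For $x\in\mathcal{D}$ let $S_{n,m}(x):=\hat f_{n,m}(x)-f_m(x)$. Suppose there exist a non-negative increasing sequence of reals $\{\Lambda_m\}_{m=1}^\infty$, a non-negative increasing sequence of positive integers $\{m(n)\}_{n=1}^\infty$, and constants $C_1,C_2>0$ such that: (1) for almost every $x,y\in\mathcal{D}$ and all $m$, $\left|\sum_{j=0}^{m-1}\phi_j(x)\phi_j^*(y)\frac{1}{p_X(y)}\right|\le C_1\Lambda_m$; (2) for all $f\in\mathcal{F}$, almost every $x\in\mathcal{D}$ and all $m$, $\left|\sum_{j=0}^{m-1}\langle f,\phi_j\rangle\phi_j(x)\right|\le C_2\Lambda_m$; (3) for all $\epsilon>0$, $\sum_{n=1}^\infty\exp\left(\frac{-\epsilon^2 n}{\Lambda_{m(n)}^2}\right)<\infty$. Then for every $f\in\mathcal{F}$ and every $x\in\mathcal{D}$ outside a set of Lebesgue measure zero, $S_n(x):=S_{n,m(n)}(x)\to0$ almost surely as $n\to\infty$.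
   Context: $\mathcal{F}$ is the set of all measurable functions $f:\mathcal{D}\to[-a,+a]$. $p_X$ is a probability density on $\mathcal{D}$ (absolutely continuous w.r.t. Lebesgue measure) whose support is $\mathcal{D}$. $\mathcal{P}_Z$ is the set of all probability distributions on $\mathbb{R}$ with mean zero and support contained in $[-b,+b]$. Given $n$, let $X_1,\dots,X_n$ be i.i.d. with density $p_X$, $Z_1,\dots,Z_n$ i.i.d. with distribution $p_Z$, and $T_1,\dots,T_n$ i.i.d. uniform on $[-c,+c]$, all mutually independent; $Y_i=f(X_i)+Z_i$, and $B_i=+1$ if $Y_i>T_i$, $B_i=-1$ otherwise. Inner product $\langle g,h\rangle=\int_{\mathcal{D}}g h^*\,dx$. The estimator is $\hat\alpha_j:=\frac{c}{n}\sum_{i=1}^n\frac{\phi_j^*(X_i)}{p_X(X_i)}B_i$ and $\hat f_{n,m}:=\sum_{j=0}^{m-1}\hat\alpha_j\phi_j$; the $m$-term approximation is $f_m:=\sum_{j=0}^{m-1}\langle f,\phi_j\rangle\phi_j$. *)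

theory Defs
  imports "HOL-Probability.Probability"
begin

definition sq_int_on :: "'a::euclidean_space set \<Rightarrow> ('a \<Rightarrow> complex) \<Rightarrow> bool" where
  "sq_int_on D g \<longleftrightarrow> g \<in> borel_measurable lborel \<and>
     set_integrable lborel D (\<lambda>x. (cmod (g x))\<^sup>2)"

definition l2_inner :: "'a::euclidean_space set \<Rightarrow> ('a \<Rightarrow> complex) \<Rightarrow> ('a \<Rightarrow> complex) \<Rightarrow> complex" where
  "l2_inner D g h = (LINT x:D|lborel. g x * cnj (h x))"

definition orthonormal_basis_L2 :: "'a::euclidean_space set \<Rightarrow> (nat \<Rightarrow> 'a \<Rightarrow> complex) \<Rightarrow> bool" where
  "orthonormal_basis_L2 D \<phi> \<longleftrightarrow>
     (\<forall>j. sq_int_on D (\<phi> j)) \<and>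
     (\<forall>j k. l2_inner D (\<phi> j) (\<phi> k) = (if j = k then 1 else 0)) \<and>
     (\<forall>g. sq_int_on D g \<longrightarrow>
        (\<lambda>m. LINT x:D|lborel. (cmod (g x - (\<Sum>j<m. l2_inner D g (\<phi> j) * \<phi> j x)))\<^sup>2)
          \<longlonglongrightarrow> 0)"

definition fun_class :: "'a::euclidean_space set \<Rightarrow> real \<Rightarrow> ('a \<Rightarrow> real) set" where
  "fun_class D a = {f. f \<in> borel_measurable borel \<and> (\<forall>x\<in>D. \<bar>f x\<bar> \<le> a)}"

definition coef :: "'a::euclidean_space set \<Rightarrow> ('a \<Rightarrow> real) \<Rightarrow> ('a \<Rightarrow> complex) \<Rightarrow> complex" where
  "coef D f \<psi> = l2_inner D (\<lambda>x. complex_of_real (f x)) \<psi>"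

definition f_approx :: "'a::euclidean_space set \<Rightarrow> (nat \<Rightarrow> 'a \<Rightarrow> complex) \<Rightarrow> ('a \<Rightarrow> real) \<Rightarrow> nat \<Rightarrow> 'a \<Rightarrow> complex" where
  "f_approx D \<phi> f m x = (\<Sum>j<m. coef D f (\<phi> j) * \<phi> j x)"

definition bit :: "('a \<Rightarrow> real) \<Rightarrow> 'a \<Rightarrow> real \<Rightarrow> real \<Rightarrow> real" where
  "bit f x z t = (if f x + z > t then 1 else -1)"

text \<open>Estimated coefficient alpha_j from the first n samples (indices 0..n-1).\<close>
definition alpha_hat :: "real \<Rightarrow> ('a \<Rightarrow> real) \<Rightarrow> (nat \<Rightarrow> 'a \<Rightarrow> complex) \<Rightarrow> ('a \<Rightarrow> real)
     \<Rightarrow> (nat \<Rightarrow> 'w \<Rightarrow> 'a) \<Rightarrow> (nat \<Rightarrow> 'w \<Rightarrow> real) \<Rightarrow> (nat \<Rightarrow> 'w \<Rightarrow> real)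
     \<Rightarrow> nat \<Rightarrow> nat \<Rightarrow> 'w \<Rightarrow> complex" where
  "alpha_hat c pX \<phi> f X Z T n j \<omega> =
     complex_of_real (c / real n) *
       (\<Sum>i<n. cnj (\<phi> j (X i \<omega>)) / complex_of_real (pX (X i \<omega>))
               * complex_of_real (bit f (X i \<omega>) (Z i \<omega>) (T i \<omega>)))"

definition f_hat :: "real \<Rightarrow> ('a \<Rightarrow> real) \<Rightarrow> (nat \<Rightarrow> 'a \<Rightarrow> complex) \<Rightarrow> ('a \<Rightarrow> real)
     \<Rightarrow> (nat \<Rightarrow> 'w \<Rightarrow> 'a) \<Rightarrow> (nat \<Rightarrow> 'w \<Rightarrow> real) \<Rightarrow> (nat \<Rightarrow> 'w \<Rightarrow> real)
     \<Rightarrow> nat \<Rightarrow> nat \<Rightarrow> 'a \<Rightarrow> 'w \<Rightarrow> complex" where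
  "f_hat c pX \<phi> f X Z T n m x \<omega> = (\<Sum>j<m. alpha_hat c pX \<phi> f X Z T n j \<omega> * \<phi> j x)"

end

theory Submission
  imports Defs
begin


lemma unif_prob: "(c::real) > 0 \<Longrightarrow> prob_space (uniform_measure lborel {-c..c})"
  by (rule prob_space_uniform_measure) auto

lemma unif_step:
  fixes c s :: real
  assumes c: "c > 0" and s: "-c \<le> s" "s \<le> c"
  shows "integral\<^sup>L (uniform_measure lborel {-c..c}) (\<lambda>t. if s > t then 1 else -1 :: real) = s / c"
proof -
  let ?U = "uniform_measure lborel {-c..c}"
  have em: "emeasure lborel {-c..c} = ennreal (2*c)" using c by simp
  interpret U: prob_space ?U using unif_prob[OF c] .
  have eq: "(\<lambda>t. if s > t then 1 else -1 :: real) = (\<lambda>t. 2 * indicator {..<s} t - 1)"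
    by (auto simp: indicator_def fun_eq_iff)
  have "integral\<^sup>L ?U (\<lambda>t. 2 * indicator {..<s} t - 1 :: real) = 2 * U.prob {..<s} - 1"
    by (subst Bochner_Integration.integral_diff) (auto intro!: U.integrable_const_bound[where B=1]
        simp: U.prob_space[simplified])
  also have "U.prob {..<s} = measure lborel ({-c..c} \<inter> {..<s}) / measure lborel {-c..c}"
    using c by (subst measure_uniform_measure) (auto simp: em)
  also have "{-c..c} \<inter> {..<s} = {-c..<s}" using s by auto
  also have "measure lborel {-c..<s} = s + c" using s by simp
  also have "measure lborel {-c..c} = 2 * c" using c by simp
  finally show ?thesis using c by (simp add: eq field_simps)
qed

lemma inner_bit:
  fixes pZ :: "real measure" and a b c s :: real
  assumes ab: "0 < a" "0 < b" and c_def: "c = a + b"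
    and pZ_prob: "prob_space pZ" and pZ_sets: "sets pZ = sets borel"
    and pZ_supp: "measure pZ {-b..b} = 1"
    and pZ_mean: "integral\<^sup>L pZ (\<lambda>z. z) = 0"
    and s: "\<bar>s\<bar> \<le> a"
  shows "integral\<^sup>L (pZ \<Otimes>\<^sub>M uniform_measure lborel {-c..c})
           (\<lambda>w. if s + fst w > snd w then 1 else -1 :: real) = s / c"
proof -
  have c: "c > 0" using ab c_def by simp
  interpret Z: prob_space pZ by fact
  interpret U: prob_space "uniform_measure lborel {-c..c}" using unif_prob[OF c] .
  interpret P: pair_prob_space pZ "uniform_measure lborel {-c..c}" ..
  have meas[measurable]: "(\<lambda>w. if s + fst w > snd w then 1 else -1 :: real) \<in> borel_measurable (pZ \<Otimes>\<^sub>M uniform_measure lborel {-c..c})"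
    by (simp add: measurable_cong_sets[OF sets_pair_measure_cong[OF pZ_sets sets_uniform_measure] refl])
  have int: "integrable (pZ \<Otimes>\<^sub>M uniform_measure lborel {-c..c}) (\<lambda>w. if s + fst w > snd w then 1 else -1 :: real)"
    by (rule P.integrable_const_bound[where B=1]) (auto)
  have AEz: "AE z in pZ. z \<in> {-b..b}"
  proof -
    have "{-b..b} \<in> sets pZ" using pZ_sets by simp
    then show ?thesis using pZ_supp Z.AE_prob_1 by blast
  qed
  have "integral\<^sup>L (pZ \<Otimes>\<^sub>M uniform_measure lborel {-c..c}) (\<lambda>w. if s + fst w > snd w then 1 else -1 :: real)
       = (\<integral>z. (\<integral>t. (if s + z > t then 1 else -1 :: real) \<partial>uniform_measure lborel {-c..c}) \<partial>pZ)"
    using P.integral_fst'[OF int] by simp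
  also have "\<dots> = (\<integral>z. (s + z) / c \<partial>pZ)"
    apply (rule integral_cong_AE)
      apply (simp_all add: measurable_cong_sets[OF pZ_sets refl])
    using AEz apply eventually_elim
    apply (rule unif_step[OF c]) using s c_def by auto
  also have "\<dots> = (s + integral\<^sup>L pZ (\<lambda>z. z)) / c"
  proof -
    have iz: "integrable pZ (\<lambda>z. z)"
      by (rule Z.integrable_const_bound[where B=b]) (use AEz in \<open>auto simp: measurable_cong_sets[OF pZ_sets refl]\<close>)
    show ?thesis using iz by (simp add: Z.prob_space[simplified] Bochner_Integration.integral_add add_divide_distrib)
  qed
  finally show ?thesis using pZ_mean by simp
qed



definition Kf :: "(nat \<Rightarrow> 'a \<Rightarrow> complex) \<Rightarrow> ('a \<Rightarrow> real) \<Rightarrow> 'a \<Rightarrow> nat \<Rightarrow> 'a \<Rightarrow> complex" where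
  "Kf \<phi> pX x m y = (\<Sum>j<m. \<phi> j x * cnj (\<phi> j y) / complex_of_real (pX y))"

definition gf :: "real \<Rightarrow> ('a\<Rightarrow>real) \<Rightarrow> (nat \<Rightarrow> 'a \<Rightarrow> complex) \<Rightarrow> ('a \<Rightarrow> real) \<Rightarrow> 'a \<Rightarrow> nat
     \<Rightarrow> 'a \<times> real \<times> real \<Rightarrow> complex" where
  "gf c pX \<phi> f x m v = complex_of_real c * Kf \<phi> pX x m (fst v)
      * complex_of_real (bit f (fst v) (fst (snd v)) (snd (snd v)))"

lemma meas_cor: "g \<in> borel_measurable M \<Longrightarrow> (\<lambda>x. complex_of_real (g x)) \<in> borel_measurable M"
  by (rule measurable_compose[OF _ borel_measurable_of_real])

lemma meas_cnj: "g \<in> borel_measurable M \<Longrightarrow> (\<lambda>x. cnj (g x :: complex)) \<in> borel_measurable M"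
  by (rule measurable_compose[OF _ borel_measurable_continuous_onI[OF continuous_on_cnj[OF continuous_on_id]]])

lemma gf_meas:
  fixes \<phi> :: "nat \<Rightarrow> 'a::euclidean_space \<Rightarrow> complex"
  assumes [measurable]: "\<And>j. \<phi> j \<in> borel_measurable borel" "pX \<in> borel_measurable borel"
     "f \<in> borel_measurable borel"
  shows "gf c pX \<phi> f x m \<in> borel_measurable borel"
proof -
  have h1: "\<And>j. (\<lambda>y. cnj (\<phi> j y)) \<in> borel_measurable borel" by (rule meas_cnj) (rule assms)
  have h2: "(\<lambda>y. complex_of_real (pX y)) \<in> borel_measurable borel" by (rule meas_cor) (rule assms)
  have K: "Kf \<phi> pX x m \<in> borel_measurable borel"
    unfolding Kf_def by (intro borel_measurable_sum borel_measurable_times borel_measurable_divide borel_measurable_const h1 h2)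
  have B0: "(\<lambda>v. bit f (fst v) (fst (snd v)) (snd (snd v))) \<in> borel_measurable (borel \<Otimes>\<^sub>M (borel \<Otimes>\<^sub>M borel))"
    unfolding bit_def by measurable
  then have B: "(\<lambda>v. bit f (fst v) (fst (snd v)) (snd (snd v))) \<in> borel_measurable borel"
    by (simp add: borel_prod)
  have B2: "(\<lambda>v. complex_of_real (bit f (fst v) (fst (snd v)) (snd (snd v)))) \<in> borel_measurable borel"
    by (rule meas_cor[OF B])
  have K2: "(\<lambda>v. Kf \<phi> pX x m (fst v)) \<in> borel_measurable (borel :: ('a \<times> real \<times> real) measure)"
  proof -
    have "(\<lambda>v. Kf \<phi> pX x m (fst v)) \<in> borel_measurable (borel \<Otimes>\<^sub>M (borel :: (real \<times> real) measure))"
      by (rule measurable_compose[OF measurable_fst K])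
    then show ?thesis by (simp add: borel_prod)
  qed
  show ?thesis unfolding gf_def
    by (intro borel_measurable_times borel_measurable_const K2 B2)
qed

lemma density_prob:
  fixes pX :: "'a::euclidean_space \<Rightarrow> real"
  assumes pX_meas: "pX \<in> borel_measurable borel"
    and pX_nonneg: "\<And>x. pX x \<ge> 0"
    and pX_out: "\<And>x. x \<notin> D \<Longrightarrow> pX x = 0"
    and pX_int: "(LINT x:D|lborel. pX x) = 1"
  shows "prob_space (density lborel (\<lambda>x. ennreal (pX x)))"
proof
  have eq: "(\<lambda>x. indicator D x *\<^sub>R pX x) = pX"
    using pX_out by (auto simp: fun_eq_iff indicator_def)
  have i1: "integral\<^sup>L lborel pX = 1" using pX_int eq by (simp add: set_lebesgue_integral_def)
  then have "integrable lborel pX" using not_integrable_integral_eq by fastforce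
  then have "(\<integral>\<^sup>+x. ennreal (pX x) \<partial>lborel) = ennreal 1"
    using i1 pX_nonneg by (subst nn_integral_eq_integral) auto
  then show "emeasure (density lborel (\<lambda>x. ennreal (pX x))) (space (density lborel (\<lambda>x. ennreal (pX x)))) = 1"
    using pX_meas by (simp add: emeasure_density)
qed

lemma sq_int_set_integrable:
  fixes g :: "'a::euclidean_space \<Rightarrow> complex"
  assumes "sq_int_on D g" "compact D"
  shows "integrable lborel (\<lambda>y. indicator D y * cmod (g y))"
proof -
  have gm[measurable]: "g \<in> borel_measurable borel" using assms(1) unfolding sq_int_on_def
    by (simp add: measurable_cong_sets[OF sets_lborel refl])
  have Ds[measurable]: "D \<in> sets borel" using assms(2) by (simp add: compact_imp_closed)
  have fin: "emeasure lborel D < \<infinity>" using emeasure_bounded_finite[OF compact_imp_bounded[OF assms(2)]] by simp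
  have i2: "integrable lborel (\<lambda>y. indicator D y *\<^sub>R (cmod (g y))\<^sup>2)"
    using assms(1) unfolding sq_int_on_def set_integrable_def by simp
  have i1: "integrable lborel (\<lambda>y. indicator D y :: real)"
    using fin by (intro integrable_real_indicator) auto
  have i3: "integrable lborel (\<lambda>y. indicator D y + indicator D y *\<^sub>R (cmod (g y))\<^sup>2 :: real)"
    using i1 i2 by (rule Bochner_Integration.integrable_add)
  show ?thesis
  proof (rule Bochner_Integration.integrable_bound[OF i3])
    show "(\<lambda>y. indicator D y * cmod (g y)) \<in> borel_measurable lborel" by simp
    show "AE x in lborel. norm (indicator D x * cmod (g x)) \<le> norm (indicator D x + indicator D x *\<^sub>R (cmod (g x))\<^sup>2 :: real)"
    proof (rule AE_I2)
      fix x
      have "cmod (g x) \<le> 1 + (cmod (g x))\<^sup>2"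
        by (smt (verit) power2_eq_square mult_le_cancel_left1 zero_le_square)
      then show "norm (indicator D x * cmod (g x)) \<le> norm (indicator D x + indicator D x *\<^sub>R (cmod (g x))\<^sup>2 :: real)"
        by (auto simp: indicator_def)
    qed
  qed
qed



lemma density_Kf:
  fixes \<phi> :: "nat \<Rightarrow> 'a::euclidean_space \<Rightarrow> complex"
  assumes D_compact: "compact D"
    and pX_meas: "pX \<in> borel_measurable borel"
    and pX_nonneg: "\<And>x. pX x \<ge> 0"
    and pX_out: "\<And>x. x \<notin> D \<Longrightarrow> pX x = 0"
    and pX_pos: "\<And>y. y \<in> D \<Longrightarrow> pX y > 0"
    and sq: "\<And>j. sq_int_on D (\<phi> j)"
    and f: "f \<in> fun_class D a"
  shows "integral\<^sup>L (density lborel (\<lambda>y. ennreal (pX y))) (\<lambda>y. Kf \<phi> pX x m y * complex_of_real (f y))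
         = f_approx D \<phi> f m x"
proof -
  have fm[measurable]: "f \<in> borel_measurable borel" and fa: "\<And>y. y \<in> D \<Longrightarrow> \<bar>f y\<bar> \<le> a"
    using f by (auto simp: fun_class_def)
  have phim: "\<And>j. \<phi> j \<in> borel_measurable borel" using sq unfolding sq_int_on_def
    by (simp add: measurable_cong_sets[OF sets_lborel refl])
  have Ds[measurable]: "D \<in> sets borel" using D_compact by (simp add: compact_imp_closed)
  have Km: "Kf \<phi> pX x m \<in> borel_measurable borel"
  proof -
    have h1: "\<And>j. (\<lambda>y. cnj (\<phi> j y)) \<in> borel_measurable borel" by (rule meas_cnj) (rule phim)
    have h2: "(\<lambda>y. complex_of_real (pX y)) \<in> borel_measurable borel" by (rule meas_cor) (rule pX_meas)
    show ?thesis
      unfolding Kf_def by (intro borel_measurable_sum borel_measurable_times borel_measurable_divide borel_measurable_const h1 h2)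
  qed
  have fcm: "(\<lambda>y. complex_of_real (f y)) \<in> borel_measurable borel" by (rule meas_cor) (rule fm)
  have intj: "integrable lborel (\<lambda>y. indicator D y *\<^sub>R (complex_of_real (f y) * cnj (\<phi> j y)))" for j
  proof -
    have i0: "integrable lborel (\<lambda>y. a * (indicator D y * cmod (\<phi> j y)))"
      using sq_int_set_integrable[OF sq D_compact] by (rule integrable_mult_right)
    show ?thesis
    proof (rule Bochner_Integration.integrable_bound[OF i0])
      show "(\<lambda>y. indicator D y *\<^sub>R (complex_of_real (f y) * cnj (\<phi> j y))) \<in> borel_measurable lborel"
        using fcm meas_cnj[OF phim] by (simp add: measurable_cong_sets[OF sets_lborel refl] borel_measurable_times)
      show "AE y in lborel. norm (indicator D y *\<^sub>R (complex_of_real (f y) * cnj (\<phi> j y))) \<le> norm (a * (indicator D y * cmod (\<phi> j y)))"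
      proof (rule AE_I2)
        fix y show "norm (indicator D y *\<^sub>R (complex_of_real (f y) * cnj (\<phi> j y))) \<le> norm (a * (indicator D y * cmod (\<phi> j y)))"
          using fa[of y] by (auto simp: indicator_def norm_mult intro!: mult_right_mono)
      qed
    qed
  qed
  have pt: "pX y *\<^sub>R (Kf \<phi> pX x m y * complex_of_real (f y))
        = (\<Sum>j<m. \<phi> j x * (indicator D y *\<^sub>R (complex_of_real (f y) * cnj (\<phi> j y))))" for y
  proof (cases "y \<in> D")
    case True
    then have "pX y \<noteq> 0" using pX_pos[of y] by simp
    then show ?thesis using True
      by (simp add: Kf_def scaleR_conv_of_real sum_distrib_left sum_distrib_right field_simps)
  next
    case False then show ?thesis using pX_out[of y] by simp
  qed
  have "integral\<^sup>L (density lborel (\<lambda>y. ennreal (pX y))) (\<lambda>y. Kf \<phi> pX x m y * complex_of_real (f y))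
      = integral\<^sup>L lborel (\<lambda>y. pX y *\<^sub>R (Kf \<phi> pX x m y * complex_of_real (f y)))"
    by (rule integral_density) (use Km fcm pX_meas pX_nonneg in \<open>auto simp: measurable_cong_sets[OF sets_lborel refl] borel_measurable_times\<close>)
  also have "\<dots> = integral\<^sup>L lborel (\<lambda>y. \<Sum>j<m. \<phi> j x * (indicator D y *\<^sub>R (complex_of_real (f y) * cnj (\<phi> j y))))"
    by (simp add: pt)
  also have "\<dots> = (\<Sum>j<m. integral\<^sup>L lborel (\<lambda>y. \<phi> j x * (indicator D y *\<^sub>R (complex_of_real (f y) * cnj (\<phi> j y)))))"
    by (rule Bochner_Integration.integral_sum) (intro integrable_mult_right intj)
  also have "\<dots> = (\<Sum>j<m. \<phi> j x * integral\<^sup>L lborel (\<lambda>y. indicator D y *\<^sub>R (complex_of_real (f y) * cnj (\<phi> j y))))"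
    by (intro sum.cong refl integral_mult_right_zero)
  also have "\<dots> = f_approx D \<phi> f m x"
    by (simp add: f_approx_def coef_def l2_inner_def set_lebesgue_integral_def mult.commute)
  finally show ?thesis .
qed



locale setting =
  fixes D :: "'a::euclidean_space set"
    and a b c :: real
    and pX :: "'a \<Rightarrow> real"
    and pZ :: "real measure"
    and \<phi> :: "nat \<Rightarrow> 'a \<Rightarrow> complex"
    and f :: "'a \<Rightarrow> real"
  assumes D_compact: "compact D"
    and ab: "0 < a" "0 < b"
    and c_def: "c = a + b"
    and pZ_prob: "prob_space pZ"
    and pZ_sets: "sets pZ = sets borel"
    and pZ_supp: "measure pZ {-b..b} = 1"
    and pZ_mean: "integral\<^sup>L pZ (\<lambda>z. z) = 0"
    and pX_meas: "pX \<in> borel_measurable borel"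
    and pX_nonneg: "\<And>x. pX x \<ge> 0"
    and pX_out: "\<And>x. x \<notin> D \<Longrightarrow> pX x = 0"
    and pX_int: "(LINT x:D|lborel. pX x) = 1"
    and pX_pos: "\<And>y. y \<in> D \<Longrightarrow> pX y > 0"
    and sq: "\<And>j. sq_int_on D (\<phi> j)"
    and f_in: "f \<in> fun_class D a"
begin

abbreviation "Px \<equiv> density lborel (\<lambda>y. ennreal (pX y))"
abbreviation "U \<equiv> uniform_measure lborel {-c..c}"
abbreviation "Q \<equiv> pZ \<Otimes>\<^sub>M U"
abbreviation "P \<equiv> Px \<Otimes>\<^sub>M Q"

lemma c_pos: "c > 0" using ab c_def by simp

lemma phim: "\<phi> j \<in> borel_measurable borel" using sq unfolding sq_int_on_def
  by (simp add: measurable_cong_sets[OF sets_lborel refl])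

lemma fm: "f \<in> borel_measurable borel" and fa: "y \<in> D \<Longrightarrow> \<bar>f y\<bar> \<le> a"
  using f_in by (auto simp: fun_class_def)

lemma gm: "gf c pX \<phi> f x m \<in> borel_measurable borel"
  by (rule gf_meas[OF phim pX_meas fm])

sublocale Px: prob_space Px by (rule density_prob[OF pX_meas pX_nonneg pX_out pX_int])
sublocale Z: prob_space pZ by (rule pZ_prob)
sublocale U: prob_space U by (rule unif_prob[OF c_pos])
sublocale Q: pair_prob_space pZ U ..
sublocale Qp: prob_space Q by (rule Q.prob_space_axioms)
sublocale P: pair_prob_space Px Q ..

lemma sQ: "sets Q = sets (borel :: (real \<times> real) measure)"
proof -
  have "sets Q = sets (borel \<Otimes>\<^sub>M (borel::real measure))"
    by (rule sets_pair_measure_cong[OF pZ_sets]) simp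
  also have "\<dots> = sets (borel :: (real\<times>real) measure)" by (simp only: borel_prod)
  finally show ?thesis .
qed

lemma sPx: "sets Px = sets borel" by simp

lemma sP: "sets P = sets (borel :: ('a \<times> real \<times> real) measure)"
proof -
  have "sets P = sets (borel \<Otimes>\<^sub>M (borel :: (real \<times> real) measure))"
    by (rule sets_pair_measure_cong[OF sPx sQ])
  also have "\<dots> = sets (borel :: ('a \<times> real \<times> real) measure)" by (simp only: borel_prod)
  finally show ?thesis .
qed

lemma AE_D: "AE y in Px. y \<in> D"
proof -
  have "AE y in lborel. 0 < ennreal (pX y) \<longrightarrow> y \<in> D"
    by (rule AE_I2) (use pX_out in \<open>metis ennreal_0 less_irrefl\<close>)
  then show ?thesis by (subst AE_density) (use pX_meas in auto)
qed

lemma Km: "Kf \<phi> pX x m \<in> borel_measurable borel"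
proof -
  have h1: "\<And>j. (\<lambda>y. cnj (\<phi> j y)) \<in> borel_measurable borel" by (rule meas_cnj) (rule phim)
  have h2: "(\<lambda>y. complex_of_real (pX y)) \<in> borel_measurable borel" by (rule meas_cor) (rule pX_meas)
  show ?thesis
    unfolding Kf_def by (intro borel_measurable_sum borel_measurable_times borel_measurable_divide borel_measurable_const h1 h2)
qed

lemma gmP: "gf c pX \<phi> f x m \<in> borel_measurable P"
  using gm by (simp add: measurable_cong_sets[OF sP refl])

lemma cmod_gf: "cmod (gf c pX \<phi> f x m v) = c * cmod (Kf \<phi> pX x m (fst v))"
  using c_pos by (simp add: gf_def bit_def norm_mult)

context
  fixes x m Bd
  assumes good: "AE y in lborel. y \<in> D \<longrightarrow> cmod (Kf \<phi> pX x m y) \<le> Bd"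
begin

lemma AE_bound: "AE v in P. cmod (gf c pX \<phi> f x m v) \<le> c * Bd"
proof (rule P.AE_pair_measure)
  show "{v \<in> space P. cmod (gf c pX \<phi> f x m v) \<le> c * Bd} \<in> sets P"
    using gmP by measurable
  have "AE y in Px. y \<in> D \<longrightarrow> cmod (Kf \<phi> pX x m y) \<le> Bd"
    using good pX_meas by (subst AE_density) (auto elim!: eventually_mono)
  moreover note AE_D
  ultimately show "AE y in Px. AE w in Q. cmod (gf c pX \<phi> f x m (y, w)) \<le> c * Bd"
    by eventually_elim (auto simp: cmod_gf c_pos)
qed

lemma int_g: "integrable P (gf c pX \<phi> f x m)"
  by (rule P.integrable_const_bound[OF AE_bound gmP])

lemma exp_g: "integral\<^sup>L P (gf c pX \<phi> f x m) = f_approx D \<phi> f m x"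
proof -
  have "integral\<^sup>L P (gf c pX \<phi> f x m) = (\<integral>y. (\<integral>w. gf c pX \<phi> f x m (y, w) \<partial>Q) \<partial>Px)"
    using P.integral_fst'[OF int_g] by simp
  also have "\<dots> = (\<integral>y. Kf \<phi> pX x m y * complex_of_real (f y) \<partial>Px)"
  proof (rule integral_cong_AE)
    show "(\<lambda>y. \<integral>w. gf c pX \<phi> f x m (y, w) \<partial>Q) \<in> borel_measurable Px"
      by (rule Q.borel_measurable_lebesgue_integral) (use gmP in simp)
    show "(\<lambda>y. Kf \<phi> pX x m y * complex_of_real (f y)) \<in> borel_measurable Px"
      using Km meas_cor[OF fm] by (simp add: measurable_cong_sets[OF sPx refl] borel_measurable_times)
    from AE_D show "AE y in Px. (\<integral>w. gf c pX \<phi> f x m (y, w) \<partial>Q) = Kf \<phi> pX x m y * complex_of_real (f y)"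
    proof eventually_elim
      case (elim y)
      have "(\<integral>w. gf c pX \<phi> f x m (y, w) \<partial>Q) =
            (\<integral>w. (complex_of_real c * Kf \<phi> pX x m y) * complex_of_real (if f y + fst w > snd w then 1 else -1) \<partial>Q)"
        by (simp add: gf_def bit_def)
      also have "\<dots> = complex_of_real c * Kf \<phi> pX x m y * complex_of_real (f y / c)"
        using inner_bit[OF ab c_def pZ_prob pZ_sets pZ_supp pZ_mean fa[OF elim]] by simp
      finally show ?case using c_pos by simp
    qed
  qed
  also have "\<dots> = f_approx D \<phi> f m x"
    by (rule density_Kf[OF D_compact pX_meas pX_nonneg pX_out pX_pos sq f_in])
  finally show ?thesis .
qed

end
end


locale setting2 = setting D a b c pX pZ \<phi> f
  for D :: "'a::euclidean_space set" and a b c pX pZ \<phi> f +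
  fixes M :: "'w measure"
    and X :: "nat \<Rightarrow> 'w \<Rightarrow> 'a"
    and Z T :: "nat \<Rightarrow> 'w \<Rightarrow> real"
  assumes M_prob: "prob_space M"
    and indep: "prob_space.indep_vars M (\<lambda>_. borel) (\<lambda>i \<omega>. (X i \<omega>, Z i \<omega>, T i \<omega>)) UNIV"
    and distrib: "\<And>i. distr M borel (\<lambda>\<omega>. (X i \<omega>, Z i \<omega>, T i \<omega>)) =
                   density lborel (\<lambda>x. ennreal (pX x))
                     \<Otimes>\<^sub>M (pZ \<Otimes>\<^sub>M uniform_measure lborel {-c..c})"
begin

sublocale M: prob_space M by (rule M_prob)

lemma V_meas: "(\<lambda>\<omega>. (X i \<omega>, Z i \<omega>, T i \<omega>)) \<in> measurable M borel"
  using indep unfolding M.indep_vars_def by auto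

lemma fhat_eq:
  "f_hat c pX \<phi> f X Z T n m x \<omega> =
     complex_of_real (1 / real n) * (\<Sum>i<n. gf c pX \<phi> f x m (X i \<omega>, Z i \<omega>, T i \<omega>))"
  unfolding f_hat_def alpha_hat_def gf_def Kf_def
  apply (simp add: sum_distrib_left sum_distrib_right)
  apply (subst sum.swap)
  apply (intro sum.cong refl)
  apply (simp add: field_simps)
  done

context
  fixes x m Bd
  assumes good: "AE y in lborel. y \<in> D \<longrightarrow> cmod (Kf \<phi> pX x m y) \<le> Bd"
begin

lemma W_meas: "(\<lambda>\<omega>. gf c pX \<phi> f x m (X i \<omega>, Z i \<omega>, T i \<omega>)) \<in> borel_measurable M"
  by (rule measurable_compose[OF V_meas gm])

lemma W_AE: "AE \<omega> in M. cmod (gf c pX \<phi> f x m (X i \<omega>, Z i \<omega>, T i \<omega>)) \<le> c * Bd"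
proof -
  have gm'[measurable]: "gf c pX \<phi> f x m \<in> borel_measurable borel" by (rule gm)
  have "AE v in distr M borel (\<lambda>\<omega>. (X i \<omega>, Z i \<omega>, T i \<omega>)). cmod (gf c pX \<phi> f x m v) \<le> c * Bd"
    unfolding distrib[of i] by (rule AE_bound[OF good])
  then show ?thesis by (subst (asm) AE_distr_iff[OF V_meas]) auto
qed

lemma W_exp:
  fixes h :: "complex \<Rightarrow> real"
  assumes hl: "bounded_linear h"
  shows "M.expectation (\<lambda>\<omega>. h (gf c pX \<phi> f x m (X i \<omega>, Z i \<omega>, T i \<omega>))) = h (f_approx D \<phi> f m x)"
proof -
  have hm[measurable]: "h \<in> borel_measurable borel"
    by (rule borel_measurable_continuous_onI[OF linear_continuous_on[OF hl]])
  have gm'[measurable]: "gf c pX \<phi> f x m \<in> borel_measurable borel" by (rule gm)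
  have "M.expectation (\<lambda>\<omega>. h (gf c pX \<phi> f x m (X i \<omega>, Z i \<omega>, T i \<omega>)))
      = integral\<^sup>L (distr M borel (\<lambda>\<omega>. (X i \<omega>, Z i \<omega>, T i \<omega>))) (\<lambda>v. h (gf c pX \<phi> f x m v))"
    by (rule integral_distr[OF V_meas, of "\<lambda>v. h (gf c pX \<phi> f x m v)", symmetric]) measurable
  also have "\<dots> = integral\<^sup>L P (\<lambda>v. h (gf c pX \<phi> f x m v))" by (simp add: distrib)
  also have "\<dots> = h (integral\<^sup>L P (gf c pX \<phi> f x m))" by (rule integral_bounded_linear[OF hl int_g[OF good]])
  also have "\<dots> = h (f_approx D \<phi> f m x)" by (simp add: exp_g[OF good])
  finally show ?thesis .
qed

lemma hoeff:
  fixes h :: "complex \<Rightarrow> real"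
  assumes hl: "bounded_linear h" and hb: "\<And>z. \<bar>h z\<bar> \<le> cmod z"
    and n: "n > 0" and t: "t \<ge> 0" and Bd: "Bd > 0"
  shows "M.prob {\<omega> \<in> space M. \<bar>(\<Sum>i\<in>{..<n}. h (gf c pX \<phi> f x m (X i \<omega>, Z i \<omega>, T i \<omega>))) - real n * h (f_approx D \<phi> f m x)\<bar> \<ge> t}
         \<le> 2 * exp (-2 * t\<^sup>2 / (\<Sum>i\<in>{..<n}. (c * Bd - (-(c * Bd)))\<^sup>2))"
proof -
  have hm[measurable]: "h \<in> borel_measurable borel"
    by (rule borel_measurable_continuous_onI[OF linear_continuous_on[OF hl]])
  have gm'[measurable]: "gf c pX \<phi> f x m \<in> borel_measurable borel" by (rule gm)
  interpret H: Hoeffding_ineq M "{..<n}" "\<lambda>i \<omega>. h (gf c pX \<phi> f x m (X i \<omega>, Z i \<omega>, T i \<omega>))"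
    "\<lambda>_. -(c*Bd)" "\<lambda>_. c*Bd" "real n * h (f_approx D \<phi> f m x)"
  proof unfold_locales
    show "finite {..<n}" by simp
    have "M.indep_vars (\<lambda>_. borel) (\<lambda>i \<omega>. h (gf c pX \<phi> f x m (X i \<omega>, Z i \<omega>, T i \<omega>))) UNIV"
      by (rule M.indep_vars_compose2[OF indep, where Y="\<lambda>i v. h (gf c pX \<phi> f x m v)"]) measurable
    then show "M.indep_vars (\<lambda>_. borel) (\<lambda>i \<omega>. h (gf c pX \<phi> f x m (X i \<omega>, Z i \<omega>, T i \<omega>))) {..<n}"
      by (rule M.indep_vars_subset) simp
    fix i assume "i \<in> {..<n}"
    show "AE \<omega> in M. h (gf c pX \<phi> f x m (X i \<omega>, Z i \<omega>, T i \<omega>)) \<in> {-(c*Bd)..c*Bd}"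
      using W_AE[of i] by eventually_elim (use hb in \<open>smt (verit) atLeastAtMost_iff\<close>)
  qed (simp add: W_exp[OF hl])
  show ?thesis
    by (rule H.Hoeffding_ineq_abs_ge[OF t]) (use n Bd c_pos in simp)
qed

lemma event_bound:
  assumes n: "n > 0" and e: "\<epsilon> > 0" and Bd: "Bd \<ge> 0"
  shows "M.prob {\<omega> \<in> space M. \<epsilon> \<le> cmod (f_hat c pX \<phi> f X Z T n m x \<omega> - f_approx D \<phi> f m x)}
           \<le> 4 * exp (- (\<epsilon>\<^sup>2 / (8 * c\<^sup>2) * real n) / Bd\<^sup>2)"
proof (cases "Bd = 0")
  case True
  have "M.prob {\<omega> \<in> space M. \<epsilon> \<le> cmod (f_hat c pX \<phi> f X Z T n m x \<omega> - f_approx D \<phi> f m x)} \<le> 1"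
    by (rule M.prob_le_1)
  moreover have "4 * exp (- (\<epsilon>\<^sup>2 / (8 * c\<^sup>2) * real n) / Bd\<^sup>2) = 4" using True by simp
  ultimately show ?thesis by linarith
next
  case False
  then have Bd: "Bd > 0" using Bd by simp
  define F where "F = f_approx D \<phi> f m x"
  have Wm[measurable]: "\<And>i. (\<lambda>\<omega>. gf c pX \<phi> f x m (X i \<omega>, Z i \<omega>, T i \<omega>)) \<in> borel_measurable M"
    by (rule W_meas)
  define A1 where "A1 = {\<omega> \<in> space M. real n * \<epsilon> / 2 \<le> \<bar>(\<Sum>i\<in>{..<n}. Re (gf c pX \<phi> f x m (X i \<omega>, Z i \<omega>, T i \<omega>))) - real n * Re F\<bar>}"
  define A2 where "A2 = {\<omega> \<in> space M. real n * \<epsilon> / 2 \<le> \<bar>(\<Sum>i\<in>{..<n}. Im (gf c pX \<phi> f x m (X i \<omega>, Z i \<omega>, T i \<omega>))) - real n * Im F\<bar>}"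
  have A1m: "A1 \<in> sets M" unfolding A1_def by measurable
  have A2m: "A2 \<in> sets M" unfolding A2_def by measurable
  have sub: "{\<omega> \<in> space M. \<epsilon> \<le> cmod (f_hat c pX \<phi> f X Z T n m x \<omega> - F)} \<subseteq> A1 \<union> A2"
  proof
    fix \<omega> assume "\<omega> \<in> {\<omega> \<in> space M. \<epsilon> \<le> cmod (f_hat c pX \<phi> f X Z T n m x \<omega> - F)}"
    then have om: "\<omega> \<in> space M" and le: "\<epsilon> \<le> cmod (f_hat c pX \<phi> f X Z T n m x \<omega> - F)" by auto
    define S where "S = (\<Sum>i<n. gf c pX \<phi> f x m (X i \<omega>, Z i \<omega>, T i \<omega>))"
    have Seq: "f_hat c pX \<phi> f X Z T n m x \<omega> - F = complex_of_real (1 / real n) * S - F"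
      by (simp add: fhat_eq S_def)
    have re: "Re (complex_of_real (1 / real n) * S - F) = (Re S - real n * Re F) / real n"
      using n by (simp add: field_simps)
    have im: "Im (complex_of_real (1 / real n) * S - F) = (Im S - real n * Im F) / real n"
      using n by (simp add: field_simps)
    have "\<epsilon> / 2 \<le> \<bar>Re (complex_of_real (1 / real n) * S - F)\<bar> \<or> \<epsilon> / 2 \<le> \<bar>Im (complex_of_real (1 / real n) * S - F)\<bar>"
      using le[unfolded Seq] cmod_le[of "complex_of_real (1 / real n) * S - F"] by linarith
    then have "real n * \<epsilon> / 2 \<le> \<bar>Re S - real n * Re F\<bar> \<or> real n * \<epsilon> / 2 \<le> \<bar>Im S - real n * Im F\<bar>"
      using n unfolding re im by (auto simp: abs_div field_simps)
    then show "\<omega> \<in> A1 \<union> A2" using om by (auto simp: A1_def A2_def S_def Re_sum Im_sum)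
  qed
  have t: "real n * \<epsilon> / 2 \<ge> 0" using n e by simp
  have h1: "M.prob A1 \<le> 2 * exp (-2 * (real n * \<epsilon> / 2)\<^sup>2 / (\<Sum>i\<in>{..<n}. (c * Bd - (-(c * Bd)))\<^sup>2))"
    unfolding A1_def F_def by (rule hoeff[OF bounded_linear_Re abs_Re_le_cmod n t Bd])
  have h2: "M.prob A2 \<le> 2 * exp (-2 * (real n * \<epsilon> / 2)\<^sup>2 / (\<Sum>i\<in>{..<n}. (c * Bd - (-(c * Bd)))\<^sup>2))"
    unfolding A2_def F_def by (rule hoeff[OF bounded_linear_Im abs_Im_le_cmod n t Bd])
  have ex: "-2 * (real n * \<epsilon> / 2)\<^sup>2 / (\<Sum>i\<in>{..<n}. (c * Bd - (-(c * Bd)))\<^sup>2) = - (\<epsilon>\<^sup>2 / (8 * c\<^sup>2) * real n) / Bd\<^sup>2"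
    using n Bd c_pos by (simp add: field_simps power2_eq_square)
  have "M.prob {\<omega> \<in> space M. \<epsilon> \<le> cmod (f_hat c pX \<phi> f X Z T n m x \<omega> - F)} \<le> M.prob (A1 \<union> A2)"
    by (rule M.finite_measure_mono[OF sub]) (use A1m A2m in auto)
  also have "\<dots> \<le> M.prob A1 + M.prob A2" by (rule measure_Un_le) (use A1m A2m in auto)
  also have "\<dots> \<le> 4 * exp (- (\<epsilon>\<^sup>2 / (8 * c\<^sup>2) * real n) / Bd\<^sup>2)" using h1 h2 unfolding ex by simp
  finally show ?thesis by (simp add: F_def)
qed

end

end


context setting2 begin

lemma W_meas': "(\<lambda>\<omega>. gf c pX \<phi> f x m (X i \<omega>, Z i \<omega>, T i \<omega>)) \<in> borel_measurable M"
  by (rule measurable_compose[OF V_meas gm])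

lemma as_conv:
  fixes mn :: "nat \<Rightarrow> nat" and \<Lambda> :: "nat \<Rightarrow> real" and C1 :: real
  assumes good: "AE y in lborel. y \<in> D \<longrightarrow> (\<forall>m\<ge>1. cmod (Kf \<phi> pX x m y) \<le> C1 * \<Lambda> m)"
    and C1: "C1 > 0"
    and Lnn: "\<And>m. m \<ge> 1 \<Longrightarrow> \<Lambda> m \<ge> 0"
    and mn_pos: "\<And>n. n \<ge> 1 \<Longrightarrow> mn n \<ge> 1"
    and cond3: "\<And>\<epsilon>. \<epsilon> > 0 \<Longrightarrow>
                  summable (\<lambda>n. exp (- (\<epsilon>\<^sup>2 * real (Suc n)) / (\<Lambda> (mn (Suc n)))\<^sup>2))"
  shows "AE \<omega> in M. (\<lambda>n. f_hat c pX \<phi> f X Z T n (mn n) x \<omega> - f_approx D \<phi> f (mn n) x) \<longlonglongrightarrow> 0"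
proof -
  define S where "S n \<omega> = f_hat c pX \<phi> f X Z T n (mn n) x \<omega> - f_approx D \<phi> f (mn n) x" for n \<omega>
  have ev: "AE \<omega> in M. eventually (\<lambda>n. cmod (S n \<omega>) < \<epsilon>) sequentially" if e: "\<epsilon> > 0" for \<epsilon>
  proof -
    define A where "A n = {\<omega> \<in> space M. \<epsilon> \<le> cmod (S n \<omega>)}" for n
    have Am: "A n \<in> sets M" for n
    proof -
      have Wm[measurable]: "\<And>i. (\<lambda>\<omega>. gf c pX \<phi> f x (mn n) (X i \<omega>, Z i \<omega>, T i \<omega>)) \<in> borel_measurable M"
        by (rule W_meas')
      have "A n = {\<omega> \<in> space M. \<epsilon> \<le> cmod (complex_of_real (1 / real n) * (\<Sum>i<n. gf c pX \<phi> f x (mn n) (X i \<omega>, Z i \<omega>, T i \<omega>)) - f_approx D \<phi> f (mn n) x)}"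
        by (simp add: A_def S_def fhat_eq)
      also have "\<dots> \<in> sets M" by measurable
      finally show ?thesis .
    qed
    define e' where "e' = sqrt (\<epsilon>\<^sup>2 / (8 * c\<^sup>2 * C1\<^sup>2))"
    have e'pos: "e' > 0" using e c_pos C1 by (simp add: e'_def)
    have e'sq: "e'\<^sup>2 = \<epsilon>\<^sup>2 / (8 * c\<^sup>2 * C1\<^sup>2)" unfolding e'_def by simp
    have bnd: "measure M (A (Suc n)) \<le> 4 * exp (- (e'\<^sup>2 * real (Suc n)) / (\<Lambda> (mn (Suc n)))\<^sup>2)" for n
    proof -
      have m1: "mn (Suc n) \<ge> 1" by (rule mn_pos) simp
      have gd: "AE y in lborel. y \<in> D \<longrightarrow> cmod (Kf \<phi> pX x (mn (Suc n)) y) \<le> C1 * \<Lambda> (mn (Suc n))"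
        using good by eventually_elim (use m1 in auto)
      have "measure M (A (Suc n)) \<le> 4 * exp (- (\<epsilon>\<^sup>2 / (8 * c\<^sup>2) * real (Suc n)) / (C1 * \<Lambda> (mn (Suc n)))\<^sup>2)"
        unfolding A_def S_def
        by (rule event_bound[OF gd]) (use e C1 Lnn[OF m1] in auto)
      also have "- (\<epsilon>\<^sup>2 / (8 * c\<^sup>2) * real (Suc n)) / (C1 * \<Lambda> (mn (Suc n)))\<^sup>2
               = - (e'\<^sup>2 * real (Suc n)) / (\<Lambda> (mn (Suc n)))\<^sup>2"
        unfolding e'sq using C1 c_pos by (cases "\<Lambda> (mn (Suc n)) = 0") (simp_all add: power_mult_distrib field_simps)
      finally show ?thesis .
    qed
    have "summable (\<lambda>n. measure M (A (Suc n)))"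
    proof (rule summable_comparison_test')
      show "summable (\<lambda>n. 4 * exp (- (e'\<^sup>2 * real (Suc n)) / (\<Lambda> (mn (Suc n)))\<^sup>2))"
        by (rule summable_mult[OF cond3[OF e'pos]])
      show "norm (measure M (A (Suc n))) \<le> 4 * exp (- (e'\<^sup>2 * real (Suc n)) / (\<Lambda> (mn (Suc n)))\<^sup>2)" for n
        using bnd[of n] by simp
    qed
    then have sm: "summable (\<lambda>n. measure M (A n))" by (subst (asm) summable_Suc_iff)
    have "AE \<omega> in M. eventually (\<lambda>n. \<omega> \<in> space M - A n) sequentially"
      by (rule borel_cantelli_AE1[OF Am _ sm]) (simp add: M.emeasure_eq_measure)
    then show ?thesis
      by eventually_elim (auto elim!: eventually_mono simp: A_def not_le)
  qed
  have "AE \<omega> in M. \<forall>k::nat. eventually (\<lambda>n. cmod (S n \<omega>) < 1 / real (Suc k)) sequentially"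
    by (subst AE_all_countable) (auto intro!: ev)
  then have "AE \<omega> in M. (\<lambda>n. S n \<omega>) \<longlonglongrightarrow> 0"
  proof eventually_elim
    case (elim \<omega>)
    show ?case
    proof (rule tendstoI)
      fix r :: real assume "r > 0"
      then obtain k where k: "inverse (real (Suc k)) < r" using reals_Archimedean by blast
      show "eventually (\<lambda>n. dist (S n \<omega>) 0 < r) sequentially"
        using elim[rule_format, of k] by (rule eventually_mono) (use k in \<open>auto simp: inverse_eq_divide\<close>)
    qed
  qed
  then show ?thesis by (simp add: S_def)
qed

end

theorem theorem2:
  fixes D :: "'a::euclidean_space set"
    and a b c \<nu> C1 C2 :: real
    and pX :: "'a \<Rightarrow> real"
    and pZ :: "real measure"
    and \<phi> :: "nat \<Rightarrow> 'a \<Rightarrow> complex"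
    and \<Lambda> :: "nat \<Rightarrow> real"
    and mn :: "nat \<Rightarrow> nat"
    and M :: "'w measure"
    and X :: "nat \<Rightarrow> 'w \<Rightarrow> 'a"
    and Z T :: "nat \<Rightarrow> 'w \<Rightarrow> real"
  assumes D_compact: "compact D"
    and ab: "0 < a" "0 < b"
    and c_def: "c = a + b"
    and pZ_prob: "prob_space pZ"
    and pZ_sets: "sets pZ = sets borel"
    and pZ_supp: "measure pZ {-b..b} = 1"
    and pZ_mean: "integral\<^sup>L pZ (\<lambda>z. z) = 0"
    and pX_meas: "pX \<in> borel_measurable borel"
    and pX_nonneg: "\<And>x. pX x \<ge> 0"
    and pX_out: "\<And>x. x \<notin> D \<Longrightarrow> pX x = 0"
    and pX_int: "(LINT x:D|lborel. pX x) = 1"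
    and pX_inf: "(INF x\<in>D. pX x) = \<nu>" "\<nu> > 0"
    and basis: "orthonormal_basis_L2 D \<phi>"
    and Lambda_nonneg: "\<And>m. m \<ge> 1 \<Longrightarrow> \<Lambda> m \<ge> 0"
    and Lambda_mono: "mono_on {1..} \<Lambda>"
    and mn_pos: "\<And>n. n \<ge> 1 \<Longrightarrow> mn n \<ge> 1"
    and mn_mono: "mono_on {1..} mn"
    and C_pos: "C1 > 0" "C2 > 0"
    and cond1: "AE xy in lborel. fst xy \<in> D \<and> snd xy \<in> D \<longrightarrow>
                  (\<forall>m\<ge>1. cmod (\<Sum>j<m. \<phi> j (fst xy) * cnj (\<phi> j (snd xy))
                                        / complex_of_real (pX (snd xy))) \<le> C1 * \<Lambda> m)"
    and cond2: "\<And>f. f \<in> fun_class D a \<Longrightarrow>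
                  AE x in lborel. x \<in> D \<longrightarrow>
                    (\<forall>m\<ge>1. cmod (f_approx D \<phi> f m x) \<le> C2 * \<Lambda> m)"
    and cond3: "\<And>\<epsilon>. \<epsilon> > 0 \<Longrightarrow>
                  summable (\<lambda>n. exp (- (\<epsilon>\<^sup>2 * real (Suc n)) / (\<Lambda> (mn (Suc n)))\<^sup>2))"
    and M_prob: "prob_space M"
    and indep: "prob_space.indep_vars M (\<lambda>_. borel) (\<lambda>i \<omega>. (X i \<omega>, Z i \<omega>, T i \<omega>)) UNIV"
    and distrib: "\<And>i. distr M borel (\<lambda>\<omega>. (X i \<omega>, Z i \<omega>, T i \<omega>)) =
                   density lborel (\<lambda>x. ennreal (pX x))
                     \<Otimes>\<^sub>M (pZ \<Otimes>\<^sub>M uniform_measure lborel {-c..c})"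
  shows "\<forall>f \<in> fun_class D a.
           AE x in lborel. x \<in> D \<longrightarrow>
             (AE \<omega> in M. (\<lambda>n. f_hat c pX \<phi> f X Z T n (mn n) x \<omega> - f_approx D \<phi> f (mn n) x)
                           \<longlonglongrightarrow> 0)"
  proof -
  have sq: "\<And>j. sq_int_on D (\<phi> j)" using basis unfolding orthonormal_basis_L2_def by auto
  have pX_pos: "pX y > 0" if y: "y \<in> D" for y
  proof -
    have "bdd_below (pX ` D)" using pX_nonneg by (intro bdd_belowI[where m=0]) auto
    then have "(INF x\<in>D. pX x) \<le> pX y" using y by (rule cINF_lower)
    then show ?thesis using pX_inf by simp
  qed
  have AEx: "AE x in lborel. x \<in> D \<longrightarrow> (AE y in lborel. y \<in> D \<longrightarrow> (\<forall>m\<ge>1. cmod (Kf \<phi> pX x m y) \<le> C1 * \<Lambda> m))"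
  proof -
    have L: "pair_sigma_finite (lborel::'a measure) (lborel::'a measure)"
      by (intro pair_sigma_finite.intro sigma_finite_lborel)
    have "AE xy in lborel \<Otimes>\<^sub>M lborel. fst xy \<in> D \<and> snd xy \<in> D \<longrightarrow>
                  (\<forall>m\<ge>1. cmod (\<Sum>j<m. \<phi> j (fst xy) * cnj (\<phi> j (snd xy))
                                        / complex_of_real (pX (snd xy))) \<le> C1 * \<Lambda> m)"
      using cond1 by (simp only: lborel_prod)
    then have "AE x in lborel. AE y in lborel. fst (x,y) \<in> D \<and> snd (x,y) \<in> D \<longrightarrow>
                  (\<forall>m\<ge>1. cmod (\<Sum>j<m. \<phi> j (fst (x,y)) * cnj (\<phi> j (snd (x,y)))
                                        / complex_of_real (pX (snd (x,y)))) \<le> C1 * \<Lambda> m)"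
      by (rule pair_sigma_finite.AE_pair[OF L])
    then show ?thesis
      by eventually_elim (auto simp: Kf_def elim!: eventually_mono)
  qed
  show ?thesis
  proof
    fix f assume f: "f \<in> fun_class D a"
    interpret S: setting2 D a b c pX pZ \<phi> f M X Z T
      by (intro setting2.intro setting.intro setting2_axioms.intro) (fact D_compact ab c_def pZ_prob pZ_sets pZ_supp pZ_mean pX_meas pX_nonneg pX_out pX_int pX_pos sq f M_prob indep distrib)+
    show "AE x in lborel. x \<in> D \<longrightarrow>
             (AE \<omega> in M. (\<lambda>n. f_hat c pX \<phi> f X Z T n (mn n) x \<omega> - f_approx D \<phi> f (mn n) x)
                           \<longlonglongrightarrow> 0)"
      using AEx by eventually_elim (auto intro!: S.as_conv[OF _ C_pos(1) Lambda_nonneg mn_pos cond3])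
  qed
qed

end
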